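(* For a metrizable topological group $G$ which is Weil complete (i.e. complete with respect to its left uniformity), the following are equivalent: (i) $G$ is NSS; (ii) $G$ is STAP; (iii) $G$ is HTAP; (iv) $G$ is TAP.
   Context: $e$ is the neutral element; $\prod_{k=1}^n a_k=a_1\cdots a_n$. $G$ is NSS if some neighborhood of $e$ contains no nontrivial subgroup of $G$. A sequence $(g_n)$ in $G$ is hyper-multipliable if for every integer sequence $(m_n)$ the sequence $\left(\prod_{k=1}^n g_k^{m_k}\right)_n$ converges in $G$; hyper-converging if $g_n^{m_n}\to e$ for every integer sequence $(m_n)$. A subset $A\subset G$ is absolutely productive if every sequence of pairwise distinct elements of $A$ is hyper-multipliable. $G$ is TAP if every absolutely productive subset is finite; HTAP if no sequence of pairwise distinct elements is hyper-multipliable; STAP if no sequence of pairwise distinct elements is hyper-converging. *)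

theory Defs
  imports "HOL-Analysis.Analysis"
begin

text \<open>Topological groups are rendered as types of class topological_group_add
  (group_add is not assumed commutative; the group operation is written additively:
  neutral element 0, product x + y, inverse - x).\<close>

definition zmul :: "int \<Rightarrow> 'a::group_add \<Rightarrow> 'a" where
  "zmul m g = (if 0 \<le> m then (((+) g) ^^ nat m) 0 else - ((((+) g) ^^ nat (- m)) 0))"

primrec oprod :: "(nat \<Rightarrow> 'a::monoid_add) \<Rightarrow> nat \<Rightarrow> 'a" where
  "oprod f 0 = 0"
| "oprod f (Suc n) = oprod f n + f n"

definition is_subgroup :: "'a::group_add set \<Rightarrow> bool" where
  "is_subgroup H \<longleftrightarrow> 0 \<in> H \<and> (\<forall>x\<in>H. \<forall>y\<in>H. x + y \<in> H) \<and> (\<forall>x\<in>H. - x \<in> H)"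

definition NSS :: "'a::topological_group_add itself \<Rightarrow> bool" where
  "NSS _ \<longleftrightarrow> (\<exists>U. open U \<and> (0::'a) \<in> U \<and> (\<forall>H. is_subgroup H \<and> H \<subseteq> U \<longrightarrow> H = {0}))"

definition hyper_multipliable :: "(nat \<Rightarrow> 'a::topological_group_add) \<Rightarrow> bool" where
  "hyper_multipliable g \<longleftrightarrow> (\<forall>m::nat \<Rightarrow> int. convergent (\<lambda>n. oprod (\<lambda>k. zmul (m k) (g k)) n))"

definition hyper_converging :: "(nat \<Rightarrow> 'a::topological_group_add) \<Rightarrow> bool" where
  "hyper_converging g \<longleftrightarrow> (\<forall>m::nat \<Rightarrow> int. (\<lambda>n. zmul (m n) (g n)) \<longlonglongrightarrow> 0)"

definition absolutely_productive :: "'a::topological_group_add set \<Rightarrow> bool" where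
  "absolutely_productive A \<longleftrightarrow> (\<forall>g. inj g \<and> range g \<subseteq> A \<longrightarrow> hyper_multipliable g)"

definition TAP :: "'a::topological_group_add itself \<Rightarrow> bool" where
  "TAP _ \<longleftrightarrow> (\<forall>A::'a set. absolutely_productive A \<longrightarrow> finite A)"

definition HTAP :: "'a::topological_group_add itself \<Rightarrow> bool" where
  "HTAP _ \<longleftrightarrow> (\<forall>g::nat \<Rightarrow> 'a. inj g \<longrightarrow> \<not> hyper_multipliable g)"

definition STAP :: "'a::topological_group_add itself \<Rightarrow> bool" where
  "STAP _ \<longleftrightarrow> (\<forall>g::nat \<Rightarrow> 'a. inj g \<longrightarrow> \<not> hyper_converging g)"

text \<open>Cauchy filters for the left uniformity (entourages {(x,y). -x + y \<in> U},
  U a neighbourhood of 0); Weil complete = every left Cauchy filter converges.\<close>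
definition left_cauchy_filter :: "'a::topological_group_add filter \<Rightarrow> bool" where
  "left_cauchy_filter F \<longleftrightarrow> F \<noteq> bot \<and>
     (\<forall>U. open U \<and> (0::'a) \<in> U \<longrightarrow>
        (\<exists>A. eventually (\<lambda>x. x \<in> A) F \<and> (\<forall>x\<in>A. \<forall>y\<in>A. - x + y \<in> U)))"

definition weil_complete :: "'a::topological_group_add itself \<Rightarrow> bool" where
  "weil_complete _ \<longleftrightarrow> (\<forall>F::'a filter. left_cauchy_filter F \<longrightarrow> (\<exists>x. F \<le> nhds x))"

end

theory Submission
  imports Defs
begin


abbreviation npow :: "nat \<Rightarrow> 'a::group_add \<Rightarrow> 'a" where
  "npow k g \<equiv> (((+) g) ^^ k) 0"

lemma npow_comm: "npow k g + g = g + npow k (g::'a::group_add)"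
  by (induction k) (simp_all add: add.assoc)

lemma zmul_plus1: "zmul a g + g = zmul (a+1) (g::'a::group_add)"
proof (cases "0 \<le> a")
  case True
  then have "nat (a+1) = Suc (nat a)" by simp
  then show ?thesis using True by (simp add: zmul_def npow_comm)
next
  case False
  define k where "k = nat (-a) - 1"
  have k: "a = - int (Suc k)" using False k_def by simp
  have z1: "zmul a g = - npow (Suc k) g" using k by (simp add: zmul_def del: of_nat_Suc)
  have z2: "zmul (a+1) g = - npow k g"
  proof (cases k)
    case 0 then show ?thesis using k by (simp add: zmul_def)
  next
    case (Suc j)
    have "\<not> 0 \<le> a + 1" "nat (- (a+1)) = k" using k Suc by simp_all
    then show ?thesis by (simp add: zmul_def)
  qed
  have "- npow (Suc k) g + g = - npow k g" by (simp add: minus_add add.assoc)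
  then show ?thesis using z1 z2 by simp
qed

lemma zmul_minus1: "zmul a g + - g = zmul (a-1) (g::'a::group_add)"
proof -
  have "zmul (a-1) g + g = zmul a g" using zmul_plus1[of "a-1" g] by simp
  then have "zmul a g + - g = zmul (a-1) g + g + - g" by simp
  also have "\<dots> = zmul (a-1) g" by (simp add: add.assoc)
  finally show ?thesis .
qed

lemma zmul_add: "zmul a g + zmul b g = zmul (a+b) (g::'a::group_add)"
proof (induction b rule: int_induct[where k=0])
  case base then show ?case by (simp add: zmul_def)
next
  case (step1 i)
  have "zmul a g + zmul (i+1) g = zmul a g + zmul i g + g" by (simp add: zmul_plus1 add.assoc)
  then show ?case using step1 by (simp add: zmul_plus1 add.assoc[symmetric])
next
  case (step2 i)
  have "zmul a g + zmul (i-1) g = zmul a g + (zmul i g + - g)" by (simp only: zmul_minus1)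
  also have "\<dots> = zmul (a + i) g + - g" by (simp only: add.assoc[symmetric] step2)
  also have "\<dots> = zmul (a + (i - 1)) g" by (simp only: zmul_minus1) (simp add: algebra_simps)
  finally show ?case .
qed

lemma zmul_neg: "- zmul a g = zmul (-a) (g::'a::group_add)"
  by (simp add: zmul_def)

lemma zmul_subgroup: "is_subgroup H \<Longrightarrow> g \<in> H \<Longrightarrow> zmul m g \<in> H"
proof -
  assume H: "is_subgroup H" "g \<in> H"
  have "npow k g \<in> H" for k by (induction k) (use H in \<open>auto simp: is_subgroup_def\<close>)
  then show ?thesis using H by (auto simp: zmul_def is_subgroup_def)
qed

lemma cyclic_subgroup: "is_subgroup (range (\<lambda>m. zmul m (g::'a::group_add)))"
  unfolding is_subgroup_def
proof (intro conjI ballI)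
  show "0 \<in> range (\<lambda>m. zmul m g)" by (rule range_eqI[of _ _ 0]) (simp add: zmul_def)
next
  fix x y assume "x \<in> range (\<lambda>m. zmul m g)" "y \<in> range (\<lambda>m. zmul m g)"
  then show "x + y \<in> range (\<lambda>m. zmul m g)" by (auto simp: zmul_add)
next
  fix x assume "x \<in> range (\<lambda>m. zmul m g)"
  then show "- x \<in> range (\<lambda>m. zmul m g)" by (auto simp: zmul_neg)
qed

lemma zmul_one: "zmul 1 g = g" by (simp add: zmul_def)



lemma oprod_split: "oprod f (n1+n2) = oprod f n1 + oprod (\<lambda>i. f (n1+i)) n2"
  by (induction n2) (simp_all add: add.assoc)

lemma oprod_Suc_left: "oprod f (Suc n) = f 0 + oprod (\<lambda>i. f (Suc i)) n"
  using oprod_split[of f 1 n] by simp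

lemma key:
  fixes V :: "nat \<Rightarrow> 'a::group_add set"
  assumes V3: "\<And>n x y z. x\<in>V (Suc n) \<Longrightarrow> y\<in>V (Suc n) \<Longrightarrow> z\<in>V (Suc n) \<Longrightarrow> x+y+z \<in> V n"
   and V0: "\<And>n. 0 \<in> V n"
  shows "(\<forall>i<n. x (a+i) \<in> V (\<sigma> (a+i)) \<and> N < \<sigma> (a+i)) \<Longrightarrow> inj_on \<sigma> {a..<a+n}
     \<Longrightarrow> oprod (\<lambda>i. x (a+i)) n \<in> V N"
proof (induction n arbitrary: a N rule: less_induct)
  case (less n)
  have VS: "V (Suc m) \<subseteq> V m" for m
  proof
    fix y assume "y \<in> V (Suc m)" then show "y \<in> V m" using V3[of 0 m y 0] V0 by simp
  qed
  have mono: "V m \<subseteq> V k" if "k \<le> m" for k m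
    using that by (induction m rule: dec_induct) (use VS in auto)
  show ?case
  proof (cases n)
    case 0 then show ?thesis using V0 by simp
  next
    case (Suc n')
    define S where "S = {a..<a+n}"
    have fS: "finite S" "S \<noteq> {}" using Suc by (auto simp: S_def)
    define j where "j = Min (\<sigma> ` S)"
    have "j \<in> \<sigma> ` S" using fS unfolding j_def by (intro Min_in) auto
    then obtain p where p: "p \<in> S" "\<sigma> p = j" by auto
    have jmin: "\<And>q. q \<in> S \<Longrightarrow> j \<le> \<sigma> q" using fS unfolding j_def by auto
    define q where "q = p - a"
    define r where "r = n - q - 1"
    have pq: "p = a + q" and nqr: "n = q + Suc r" using p(1) by (auto simp: S_def q_def r_def)
    have strict: "\<And>t. t \<in> S \<Longrightarrow> t \<noteq> p \<Longrightarrow> j < \<sigma> t"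
      using jmin p less.prems(2) unfolding S_def inj_on_def
      by (metis S_def le_neq_implies_less)
    have jN: "N < j" using less.prems(1) p pq nqr by auto
    then obtain j' where j': "j = Suc j'" "N \<le> j'" by (cases j) auto
    have L: "oprod (\<lambda>i. x (a+i)) q \<in> V j"
    proof (rule less.IH)
      show "q < n" using nqr by simp
      show "\<forall>i<q. x (a+i) \<in> V (\<sigma> (a+i)) \<and> j < \<sigma> (a+i)"
        using less.prems(1) nqr strict pq by (auto simp: S_def)
      show "inj_on \<sigma> {a..<a+q}" using less.prems(2) nqr by (auto intro: inj_on_subset)
    qed
    have R0: "oprod (\<lambda>i. x ((a+q+1)+i)) r \<in> V j"
    proof (rule less.IH)
      show "r < n" using nqr by simp
      show "\<forall>i<r. x ((a+q+1)+i) \<in> V (\<sigma> ((a+q+1)+i)) \<and> j < \<sigma> ((a+q+1)+i)"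
      proof (intro allI impI)
        fix i assume "i < r"
        then have "q+1+i < n" using nqr by simp
        then show "x ((a+q+1)+i) \<in> V (\<sigma> ((a+q+1)+i)) \<and> j < \<sigma> ((a+q+1)+i)"
          using less.prems(1) strict[of "a+q+1+i"] pq by (auto simp: S_def add.assoc)
      qed
      show "inj_on \<sigma> {a+q+1..<a+q+1+r}" using less.prems(2) nqr by (auto intro: inj_on_subset)
    qed
    have M: "x (a+q) \<in> V j" using less.prems(1) nqr p pq by auto
    have "oprod (\<lambda>i. x (a+i)) n = oprod (\<lambda>i. x (a+i)) q + (x (a+q) + oprod (\<lambda>i. x ((a+q+1)+i)) r)"
      unfolding nqr oprod_split oprod_Suc_left by (simp add: ac_simps)
    also have "\<dots> = oprod (\<lambda>i. x (a+i)) q + x (a+q) + oprod (\<lambda>i. x ((a+q+1)+i)) r"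
      by (simp add: add.assoc)
    also have "\<dots> \<in> V j'" using V3[where n=j'] L R0 M j' by simp
    finally show ?thesis using mono[OF j'(2)] by blast
  qed
qed



lemma small2:
  fixes U :: "'a::topological_group_add set"
  assumes "open U" "0 \<in> U"
  shows "\<exists>W. open W \<and> 0 \<in> W \<and> (\<forall>x\<in>W. \<forall>y\<in>W. x+y \<in> U)"
proof -
  have "open ((\<lambda>p::'a\<times>'a. fst p + snd p) -` U)"
    by (intro open_vimage assms continuous_intros)
  moreover have "(0,0) \<in> (\<lambda>p::'a\<times>'a. fst p + snd p) -` U" using assms by simp
  ultimately obtain A B where AB: "open A" "open B" "(0,0) \<in> A \<times> B"
     "A \<times> B \<subseteq> (\<lambda>p::'a\<times>'a. fst p + snd p) -` U"
    by (rule open_prod_elim)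
  show ?thesis
    by (rule exI[of _ "A \<inter> B"]) (use AB in auto)
qed

lemma small3:
  fixes U :: "'a::topological_group_add set"
  assumes "open U" "0 \<in> U"
  shows "\<exists>W. open W \<and> 0 \<in> W \<and> (\<forall>x\<in>W. \<forall>y\<in>W. \<forall>z\<in>W. x+y+z \<in> U)"
proof -
  obtain W1 where W1: "open W1" "0 \<in> W1" "\<forall>x\<in>W1. \<forall>y\<in>W1. x+y \<in> U"
    using small2[OF assms] by blast
  obtain W2 where W2: "open W2" "0 \<in> W2" "\<forall>x\<in>W2. \<forall>y\<in>W2. x+y \<in> W1"
    using small2[OF W1(1,2)] by blast
  show ?thesis
    by (rule exI[of _ "W2 \<inter> W1"]) (use W1 W2 in auto)
qed

lemma nbhd_seq:
  assumes "metrizable_space (euclidean :: 'a::topological_group_add topology)"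
  shows "\<exists>V::nat\<Rightarrow>'a set. (\<forall>n. open (V n) \<and> 0 \<in> V n)
     \<and> (\<forall>n x y z. x\<in>V (Suc n) \<longrightarrow> y\<in>V (Suc n) \<longrightarrow> z\<in>V (Suc n) \<longrightarrow> x+y+z \<in> V n)
     \<and> (\<forall>U. open U \<and> 0\<in>U \<longrightarrow> (\<exists>n. V n \<subseteq> U))"
proof -
  have "first_countable (euclidean :: 'a topology)"
    using assms by (rule metrizable_imp_first_countable)
  then obtain B :: "'a set set" where B: "countable B" "\<forall>V\<in>B. open V"
     "\<forall>U. open U \<and> (0::'a) \<in> U \<longrightarrow> (\<exists>V\<in>B. 0 \<in> V \<and> V \<subseteq> U)"
    unfolding first_countable_def by (metis open_openin topspace_euclidean UNIV_I)
  define B' where "B' = {b\<in>B. 0 \<in> b}"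
  have B'ne: "B' \<noteq> {}" using B(3)[rule_format, of UNIV] by (auto simp: B'_def)
  have cB': "countable B'" using B(1) by (auto simp: B'_def)
  define b where "b = from_nat_into B'"
  have bB: "b n \<in> B'" for n using B'ne by (simp add: b_def from_nat_into)
  have bopen: "open (b n) \<and> 0 \<in> b n" for n using bB[of n] B(2) by (auto simp: B'_def)
  have brange: "\<forall>U. open U \<and> 0 \<in> U \<longrightarrow> (\<exists>n. b n \<subseteq> U)"
  proof (intro allI impI)
    fix U :: "'a set" assume "open U \<and> 0 \<in> U"
    then obtain V where "V \<in> B" "0 \<in> V" "V \<subseteq> U" using B(3) by blast
    then have "V \<in> B'" by (simp add: B'_def)
    then obtain n where "b n = V" using from_nat_into_surj[OF cB'] b_def by metis
    then show "\<exists>n. b n \<subseteq> U" using \<open>V \<subseteq> U\<close> by blast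
  qed
  define Wf where "Wf U = (SOME W. open W \<and> (0::'a) \<in> W \<and> (\<forall>x\<in>W. \<forall>y\<in>W. \<forall>z\<in>W. x+y+z \<in> U))" for U
  have Wf: "open (Wf U) \<and> 0 \<in> Wf U \<and> (\<forall>x\<in>Wf U. \<forall>y\<in>Wf U. \<forall>z\<in>Wf U. x+y+z \<in> U)"
    if "open U" "0 \<in> U" for U
    unfolding Wf_def by (rule someI_ex) (rule small3[OF that])
  define V where "V = rec_nat UNIV (\<lambda>n Vn. Wf (Vn \<inter> b n))"
  have VS: "V (Suc n) = Wf (V n \<inter> b n)" for n by (simp add: V_def)
  have V0: "V 0 = UNIV" by (simp add: V_def)
  have Vo: "open (V n) \<and> 0 \<in> V n" for n
  proof (induction n)
    case 0 then show ?case by (simp add: V0)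
  next
    case (Suc n) then show ?case using Wf[of "V n \<inter> b n"] bopen[of n] by (simp add: VS open_Int)
  qed
  have V3: "x+y+z \<in> V n \<inter> b n" if "x\<in>V (Suc n)" "y\<in>V (Suc n)" "z\<in>V (Suc n)" for n x y z
  proof -
    have o: "open (V n \<inter> b n)" "0 \<in> V n \<inter> b n" using Vo[of n] bopen[of n] by auto
    show ?thesis using Wf[OF o] that unfolding VS by blast
  qed
  have Vb: "V (Suc n) \<subseteq> b n" for n
  proof
    fix x assume "x \<in> V (Suc n)"
    then show "x \<in> b n" using V3[of x n 0 0] Vo[of "Suc n"] by simp
  qed
  have "\<forall>U. open U \<and> 0\<in>U \<longrightarrow> (\<exists>n. V n \<subseteq> U)"
  proof (intro allI impI)
    fix U :: "'a set" assume "open U \<and> 0\<in>U"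
    then obtain n where "b n \<subseteq> U" using brange by blast
    then have "V (Suc n) \<subseteq> U" using Vb[of n] by (rule subset_trans[rotated])
    then show "\<exists>n. V n \<subseteq> U" ..
  qed
  moreover have "\<forall>n x y z. x\<in>V (Suc n) \<longrightarrow> y\<in>V (Suc n) \<longrightarrow> z\<in>V (Suc n) \<longrightarrow> x+y+z \<in> V n"
    using V3 by (meson IntD1)
  ultimately show ?thesis using Vo by (intro exI[of _ V]) simp
qed



lemma Vmono:
  fixes V :: "nat \<Rightarrow> 'a::group_add set"
  assumes V3: "\<And>n x y z. x\<in>V (Suc n) \<Longrightarrow> y\<in>V (Suc n) \<Longrightarrow> z\<in>V (Suc n) \<Longrightarrow> x+y+z \<in> V n"
   and V0: "\<And>n. 0 \<in> V n" and "k \<le> m"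
  shows "V m \<subseteq> V k"
proof -
  have VS: "V (Suc m) \<subseteq> V m" for m
  proof
    fix y assume "y \<in> V (Suc m)" then show "y \<in> V m" using V3[of 0 m y 0] V0 by simp
  qed
  show ?thesis using assms(3) by (induction m rule: dec_induct) (use VS in auto)
qed

lemma nss_stap: "NSS TYPE('a::topological_group_add) \<Longrightarrow> STAP TYPE('a)"
proof -
  assume "NSS TYPE('a)"
  then obtain U :: "'a set" where U: "open U" "0 \<in> U" "\<And>H. is_subgroup H \<Longrightarrow> H \<subseteq> U \<Longrightarrow> H = {0}"
    unfolding NSS_def by blast
  show ?thesis unfolding STAP_def
  proof (intro allI impI notI)
    fix g :: "nat \<Rightarrow> 'a" assume inj: "inj g" and hc: "hyper_converging g"
    have ex: "\<exists>m. zmul m (g n) \<notin> U" if "g n \<noteq> 0" for n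
    proof (rule ccontr)
      assume "\<nexists>m. zmul m (g n) \<notin> U"
      then have "range (\<lambda>m. zmul m (g n)) \<subseteq> U" by auto
      then have "range (\<lambda>m. zmul m (g n)) = {0}" using U(3) cyclic_subgroup by blast
      then have "zmul 1 (g n) = 0" by blast
      then show False using that by (simp add: zmul_one)
    qed
    define m where "m n = (SOME m. zmul m (g n) \<notin> U)" for n
    have mU: "zmul (m n) (g n) \<notin> U" if "g n \<noteq> 0" for n
      unfolding m_def using someI_ex[OF ex[OF that]] .
    have "(\<lambda>n. zmul (m n) (g n)) \<longlonglongrightarrow> 0" using hc unfolding hyper_converging_def by blast
    then have "eventually (\<lambda>n. zmul (m n) (g n) \<in> U) sequentially"
      using U(1,2) by (rule topological_tendstoD)
    then obtain N where N: "\<And>n. n \<ge> N \<Longrightarrow> zmul (m n) (g n) \<in> U"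
      unfolding eventually_sequentially by blast
    have "g N \<noteq> 0 \<or> g (Suc N) \<noteq> 0" using inj by (metis injD n_not_Suc_n)
    then show False using N[of N] N[of "Suc N"] mU by auto
  qed
qed

lemma mult_conv: "hyper_multipliable g \<Longrightarrow> hyper_converging (g :: nat \<Rightarrow> 'a::topological_group_add)"
  unfolding hyper_converging_def
proof
  fix m :: "nat \<Rightarrow> int"
  assume "hyper_multipliable g"
  then obtain L where L: "(\<lambda>n. oprod (\<lambda>k. zmul (m k) (g k)) n) \<longlonglongrightarrow> L"
    unfolding hyper_multipliable_def convergent_def by blast
  define P where "P = (\<lambda>n. oprod (\<lambda>k. zmul (m k) (g k)) n)"
  have eq: "zmul (m n) (g n) = - P n + P (Suc n)" for n
    by (simp add: P_def add.assoc[symmetric])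
  have "(\<lambda>n. - P n + P (Suc n)) \<longlonglongrightarrow> - L + L"
    using L unfolding P_def by (intro tendsto_add tendsto_minus LIMSEQ_Suc)
  then show "(\<lambda>n. zmul (m n) (g n)) \<longlonglongrightarrow> 0" unfolding eq by simp
qed

lemma stap_htap: "STAP TYPE('a::topological_group_add) \<Longrightarrow> HTAP TYPE('a)"
  unfolding STAP_def HTAP_def using mult_conv by blast

lemma htap_tap: "HTAP TYPE('a::topological_group_add) \<Longrightarrow> TAP TYPE('a)"
  unfolding HTAP_def TAP_def absolutely_productive_def
  using infinite_countable_subset by blast



lemma tap_nss:
  assumes met: "metrizable_space (euclidean :: 'a::topological_group_add topology)"
    and wc: "weil_complete TYPE('a)"
    and tap: "TAP TYPE('a)"
  shows "NSS TYPE('a)"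
proof (rule ccontr)
  assume nN: "\<not> NSS TYPE('a)"
  obtain V :: "nat \<Rightarrow> 'a set" where Vo: "\<And>n. open (V n) \<and> 0 \<in> V n"
    and V3: "\<And>n x y z. x\<in>V (Suc n) \<Longrightarrow> y\<in>V (Suc n) \<Longrightarrow> z\<in>V (Suc n) \<Longrightarrow> x+y+z \<in> V n"
    and Vb: "\<And>U. open U \<Longrightarrow> 0\<in>U \<Longrightarrow> \<exists>n. V n \<subseteq> U"
    using nbhd_seq[OF met] by metis
  have V0: "\<And>n. 0 \<in> V n" using Vo by blast
  have exh: "\<exists>h. h \<noteq> 0 \<and> (\<forall>m. zmul m h \<in> V n)" for n
  proof -
    obtain H where H: "is_subgroup H" "H \<subseteq> V n" "H \<noteq> {0}"
      using nN Vo[of n] unfolding NSS_def by blast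
    then obtain h where "h \<in> H" "h \<noteq> 0" unfolding is_subgroup_def by blast
    then show ?thesis using H zmul_subgroup by blast
  qed
  define h where "h n = (SOME h. h \<noteq> 0 \<and> (\<forall>m. zmul m h \<in> V n))" for n
  have h: "h n \<noteq> 0" "\<And>m. zmul m (h n) \<in> V n" for n
    using someI_ex[OF exh[of n]] unfolding h_def by blast+
  have ap: "absolutely_productive (range h)"
    unfolding absolutely_productive_def hyper_multipliable_def
  proof (intro allI impI)
    fix g :: "nat \<Rightarrow> 'a" and m :: "nat \<Rightarrow> int"
    assume g: "inj g \<and> range g \<subseteq> range h"
    define \<sigma> where "\<sigma> k = (SOME j. g k = h j)" for k
    have g\<sigma>: "g k = h (\<sigma> k)" for k
    proof -
      have "\<exists>j. g k = h j" using g by blast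
      then show ?thesis unfolding \<sigma>_def by (rule someI_ex)
    qed
    have inj\<sigma>: "inj \<sigma>" using g by (metis g\<sigma> injD injI)
    define x where "x k = zmul (m k) (g k)" for k
    have xV: "x k \<in> V (\<sigma> k)" for k unfolding x_def g\<sigma> by (rule h(2))
    define P where "P = oprod x"
    have seg: "- P i + P j \<in> V N" if "\<And>k. k \<ge> i \<Longrightarrow> N < \<sigma> k" "i \<le> j" for i j N
    proof -
      have "P j = P i + oprod (\<lambda>t. x (i+t)) (j-i)"
        using oprod_split[of x i "j-i"] that(2) by (simp add: P_def)
      then have "- P i + P j = oprod (\<lambda>t. x (i+t)) (j-i)" by (simp add: add.assoc[symmetric])
      also have "\<dots> \<in> V N"
        by (rule key[where \<sigma>=\<sigma>, OF V3 V0]) (use xV that(1) inj\<sigma> in \<open>auto intro: inj_on_subset\<close>)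
      finally show ?thesis .
    qed
    have "left_cauchy_filter (filtermap P sequentially)"
      unfolding left_cauchy_filter_def
    proof (intro conjI allI impI)
      show "filtermap P sequentially \<noteq> bot" by (simp add: filtermap_bot_iff)
    next
      fix U :: "'a set" assume U: "open U \<and> 0 \<in> U"
      have "open (uminus -` U)" using U by (intro open_vimage continuous_intros) auto
      then have "open (U \<inter> uminus -` U)" using U by auto
      moreover have "0 \<in> U \<inter> uminus -` U" using U by simp
      ultimately obtain N where N: "V N \<subseteq> U \<inter> uminus -` U" using Vb by blast
      have "finite (\<sigma> -` {..N})" using inj\<sigma> by (intro finite_vimageI) auto
      then obtain a where a: "\<And>k. k \<in> \<sigma> -` {..N} \<Longrightarrow> k < a"
        by (metis finite_nat_set_iff_bounded)
      have big: "\<And>k. k \<ge> a \<Longrightarrow> N < \<sigma> k" using a by (meson atMost_iff leD not_le_imp_less vimageI)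
      show "\<exists>A. eventually (\<lambda>x. x \<in> A) (filtermap P sequentially) \<and> (\<forall>x\<in>A. \<forall>y\<in>A. - x + y \<in> U)"
      proof (intro exI conjI)
        show "eventually (\<lambda>x. x \<in> P ` {a..}) (filtermap P sequentially)"
          unfolding eventually_filtermap eventually_sequentially by auto
        show "\<forall>x\<in>P ` {a..}. \<forall>y\<in>P ` {a..}. - x + y \<in> U"
        proof (intro ballI)
          fix u v assume "u \<in> P ` {a..}" "v \<in> P ` {a..}"
          then obtain i j where ij: "u = P i" "v = P j" "i \<ge> a" "j \<ge> a" by auto
          show "- u + v \<in> U"
          proof (cases "i \<le> j")
            case True
            then show ?thesis using seg[of i N j] big ij N by auto
          next
            case False
            then have "- P j + P i \<in> V N" using seg[of j N i] big ij by auto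
            then have "- (- P j + P i) \<in> U" using N by auto
            moreover have "- (- P j + P i) = - P i + P j" by (simp add: minus_add)
            ultimately show ?thesis using ij by simp
          qed
        qed
      qed
    qed
    then obtain L where "filtermap P sequentially \<le> nhds L" using wc unfolding weil_complete_def by blast
    then have "P \<longlonglongrightarrow> L" by (simp add: filterlim_def)
    then show "convergent (\<lambda>n. oprod (\<lambda>k. zmul (m k) (g k)) n)"
      unfolding convergent_def P_def x_def by blast
  qed
  then have fin: "finite (range h)" using tap unfolding TAP_def by blast
  then obtain y where y: "y \<in> range h" "infinite (h -` {y})"
    using inf_img_fin_dom[OF fin] by auto
  have "y \<noteq> 0" using y(1) h(1) by auto
  have "t1_space (euclidean :: 'a topology)" using met by (rule metrizable_imp_t1_space)
  then obtain U :: "'a set" where U: "open U" "0 \<in> U" "y \<notin> U"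
    using \<open>y \<noteq> 0\<close> unfolding t1_space_def by (metis open_openin topspace_euclidean UNIV_I)
  obtain N where N: "V N \<subseteq> U" using Vb U by blast
  obtain n where n: "n \<ge> N" "h n = y" using y(2) by (metis infinite_nat_iff_unbounded_le vimage_singleton_eq)
  have "h n \<in> V n" using h(2)[of 1 n] by (simp add: zmul_one)
  also have "V n \<subseteq> V N" by (rule Vmono[OF V3 V0 n(1)])
  finally show False using N U n by auto
qed


theorem theorem5p4:
  assumes "metrizable_space (euclidean :: 'a::topological_group_add topology)"
    and "weil_complete TYPE('a)"
  shows "(NSS TYPE('a) \<longleftrightarrow> STAP TYPE('a)) \<and> (STAP TYPE('a) \<longleftrightarrow> HTAP TYPE('a))
         \<and> (HTAP TYPE('a) \<longleftrightarrow> TAP TYPE('a))"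
  using nss_stap[where 'a='a] stap_htap[where 'a='a] htap_tap[where 'a='a] tap_nss[OF assms] by blast

end
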